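(* Every right quasi-duo exchange ring is feckly clean, and every left quasi-duo exchange ring is feckly clean.
   Context: Rings are associative with identity, not necessarily commutative; $J(R)$ is the Jacobson radical. A ring is right (resp. left) quasi-duo if every maximal right (resp. left) ideal is a two-sided ideal. A ring $R$ is an exchange ring if for every $a\in R$ there is an idempotent $e\in R$ with $e\in aR$ and $1-e\in(1-a)R$. An element $u\in R$ is full if $RuR=R$. An element $a\in R$ is feckly clean if there exist $e\in R$ and a full element $u\in R$ with $a=e+u$ and $eR(1-e)\subseteq J(R)$; $R$ is feckly clean if every element is feckly clean. *)

theory Defs
  imports Main
begin

text \<open>Rings: type class ring_1 (associative, with identity, not necessarily commutative).
The ring R is the whole type UNIV.\<close>

definition right_ideal :: "'a::ring_1 set \<Rightarrow> bool" where
  "right_ideal I \<longleftrightarrow> 0 \<in> I \<and> (\<forall>x\<in>I. \<forall>y\<in>I. x + y \<in> I) \<and> (\<forall>x\<in>I. - x \<in> I)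
     \<and> (\<forall>x\<in>I. \<forall>r. x * r \<in> I)"

definition left_ideal :: "'a::ring_1 set \<Rightarrow> bool" where
  "left_ideal I \<longleftrightarrow> 0 \<in> I \<and> (\<forall>x\<in>I. \<forall>y\<in>I. x + y \<in> I) \<and> (\<forall>x\<in>I. - x \<in> I)
     \<and> (\<forall>x\<in>I. \<forall>r. r * x \<in> I)"

definition two_sided_ideal :: "'a::ring_1 set \<Rightarrow> bool" where
  "two_sided_ideal I \<longleftrightarrow> right_ideal I \<and> left_ideal I"

definition maximal_right_ideal :: "'a::ring_1 set \<Rightarrow> bool" where
  "maximal_right_ideal M \<longleftrightarrow> right_ideal M \<and> M \<noteq> UNIV \<and>
     (\<forall>I. right_ideal I \<and> M \<subseteq> I \<and> I \<noteq> UNIV \<longrightarrow> I = M)"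

definition maximal_left_ideal :: "'a::ring_1 set \<Rightarrow> bool" where
  "maximal_left_ideal M \<longleftrightarrow> left_ideal M \<and> M \<noteq> UNIV \<and>
     (\<forall>I. left_ideal I \<and> M \<subseteq> I \<and> I \<noteq> UNIV \<longrightarrow> I = M)"

definition jacobson :: "'a::ring_1 set" where
  "jacobson = \<Inter> {M. maximal_right_ideal M}"

definition right_quasi_duo :: "'a::ring_1 itself \<Rightarrow> bool" where
  "right_quasi_duo _ \<longleftrightarrow> (\<forall>M::'a set. maximal_right_ideal M \<longrightarrow> two_sided_ideal M)"

definition left_quasi_duo :: "'a::ring_1 itself \<Rightarrow> bool" where
  "left_quasi_duo _ \<longleftrightarrow> (\<forall>M::'a set. maximal_left_ideal M \<longrightarrow> two_sided_ideal M)"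

definition exchange_ring :: "'a::ring_1 itself \<Rightarrow> bool" where
  "exchange_ring _ \<longleftrightarrow> (\<forall>a::'a. \<exists>e. e * e = e \<and> (\<exists>r. e = a * r) \<and> (\<exists>s. 1 - e = (1 - a) * s))"

text \<open>u is full iff RuR = R, where RuR is the set of finite sums of elements r*u*s.\<close>
definition full :: "'a::ring_1 \<Rightarrow> bool" where
  "full u \<longleftrightarrow> (\<exists>n (x::nat \<Rightarrow> 'a) y. (\<Sum>i<n. x i * u * y i) = 1)"

definition feckly_clean_elem :: "'a::ring_1 \<Rightarrow> bool" where
  "feckly_clean_elem a \<longleftrightarrow> (\<exists>e u. a = e + u \<and> full u \<and> (\<forall>r. e * r * (1 - e) \<in> jacobson))"

definition feckly_clean :: "'a::ring_1 itself \<Rightarrow> bool" where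
  "feckly_clean _ \<longleftrightarrow> (\<forall>a::'a. feckly_clean_elem a)"

end

theory Submission
  imports Defs
begin

lemma zorn_right:
  fixes I :: "'a::ring_1 set"
  assumes "right_ideal I" "1 \<notin> I"
  shows "\<exists>M. maximal_right_ideal M \<and> I \<subseteq> M"
proof -
  let ?A = "{J::'a set. right_ideal J \<and> I \<subseteq> J \<and> 1 \<notin> J}"
  have "\<exists>M\<in>?A. \<forall>X\<in>?A. M \<subseteq> X \<longrightarrow> X = M"
  proof (rule subset_Zorn_nonempty)
    show "?A \<noteq> {}" using assms by blast
  next
    fix C assume C: "C \<noteq> {}" "subset.chain ?A C"
    hence sub: "C \<subseteq> ?A" and ch: "\<forall>x\<in>C. \<forall>y\<in>C. x \<subseteq> y \<or> y \<subseteq> x"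
      by (auto simp: subset.chain_def)
    have "right_ideal (\<Union>C)"
      unfolding right_ideal_def
    proof (intro conjI ballI allI)
      show "0 \<in> \<Union>C" using C(1) sub by (auto simp: right_ideal_def)
    next
      fix x y assume "x \<in> \<Union>C" "y \<in> \<Union>C"
      then obtain X Y where XY: "X \<in> C" "Y \<in> C" "x \<in> X" "y \<in> Y" by blast
      from ch XY(1,2) have "X \<subseteq> Y \<or> Y \<subseteq> X" by blast
      thus "x + y \<in> \<Union>C"
      proof
        assume "X \<subseteq> Y"
        moreover have "right_ideal Y" using XY sub by auto
        moreover have "x \<in> Y" "y \<in> Y" using XY \<open>X \<subseteq> Y\<close> by auto
        ultimately have "x + y \<in> Y" by (simp add: right_ideal_def)
        thus ?thesis using XY by blast
      next
        assume "Y \<subseteq> X"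
        moreover have "right_ideal X" using XY sub by auto
        moreover have "x \<in> X" "y \<in> X" using XY \<open>Y \<subseteq> X\<close> by auto
        ultimately have "x + y \<in> X" by (simp add: right_ideal_def)
        thus ?thesis using XY by blast
      qed
    next
      fix x assume "x \<in> \<Union>C"
      then obtain X where X: "X \<in> C" "x \<in> X" by blast
      have "right_ideal X" using X sub by auto
      hence "- x \<in> X" using X by (simp add: right_ideal_def)
      thus "- x \<in> \<Union>C" using X by blast
    next
      fix x r assume "x \<in> \<Union>C"
      then obtain X where X: "X \<in> C" "x \<in> X" by blast
      have "right_ideal X" using X sub by auto
      hence "x * r \<in> X" using X by (simp add: right_ideal_def)
      thus "x * r \<in> \<Union>C" using X by blast
    qed
    thus "\<Union>C \<in> ?A" using C(1) sub by auto
  qed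
  then obtain M where M: "M \<in> ?A" "\<forall>X\<in>?A. M \<subseteq> X \<longrightarrow> X = M" by blast
  have "maximal_right_ideal M"
    unfolding maximal_right_ideal_def
  proof (intro conjI allI impI)
    show "right_ideal M" using M by auto
    show "M \<noteq> UNIV" using M by auto
  next
    fix J assume J: "right_ideal J \<and> M \<subseteq> J \<and> J \<noteq> UNIV"
    have "1 \<notin> J"
    proof
      assume "1 \<in> J"
      hence "\<forall>x. 1 * x \<in> J" using J by (auto simp: right_ideal_def)
      thus False using J by auto
    qed
    thus "J = M" using J M by auto
  qed
  thus ?thesis using M by auto
qed

lemma zorn_left:
  fixes I :: "'a::ring_1 set"
  assumes "left_ideal I" "1 \<notin> I"
  shows "\<exists>M. maximal_left_ideal M \<and> I \<subseteq> M"
proof -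
  let ?A = "{J::'a set. left_ideal J \<and> I \<subseteq> J \<and> 1 \<notin> J}"
  have "\<exists>M\<in>?A. \<forall>X\<in>?A. M \<subseteq> X \<longrightarrow> X = M"
  proof (rule subset_Zorn_nonempty)
    show "?A \<noteq> {}" using assms by blast
  next
    fix C assume C: "C \<noteq> {}" "subset.chain ?A C"
    hence sub: "C \<subseteq> ?A" and ch: "\<forall>x\<in>C. \<forall>y\<in>C. x \<subseteq> y \<or> y \<subseteq> x"
      by (auto simp: subset.chain_def)
    have "left_ideal (\<Union>C)"
      unfolding left_ideal_def
    proof (intro conjI ballI allI)
      show "0 \<in> \<Union>C" using C(1) sub by (auto simp: left_ideal_def)
    next
      fix x y assume "x \<in> \<Union>C" "y \<in> \<Union>C"
      then obtain X Y where XY: "X \<in> C" "Y \<in> C" "x \<in> X" "y \<in> Y" by blast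
      from ch XY(1,2) have "X \<subseteq> Y \<or> Y \<subseteq> X" by blast
      thus "x + y \<in> \<Union>C"
      proof
        assume "X \<subseteq> Y"
        moreover have "left_ideal Y" using XY sub by auto
        moreover have "x \<in> Y" "y \<in> Y" using XY \<open>X \<subseteq> Y\<close> by auto
        ultimately have "x + y \<in> Y" by (simp add: left_ideal_def)
        thus ?thesis using XY by blast
      next
        assume "Y \<subseteq> X"
        moreover have "left_ideal X" using XY sub by auto
        moreover have "x \<in> X" "y \<in> X" using XY \<open>Y \<subseteq> X\<close> by auto
        ultimately have "x + y \<in> X" by (simp add: left_ideal_def)
        thus ?thesis using XY by blast
      qed
    next
      fix x assume "x \<in> \<Union>C"
      then obtain X where X: "X \<in> C" "x \<in> X" by blast
      have "left_ideal X" using X sub by auto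
      hence "- x \<in> X" using X by (simp add: left_ideal_def)
      thus "- x \<in> \<Union>C" using X by blast
    next
      fix x r assume "x \<in> \<Union>C"
      then obtain X where X: "X \<in> C" "x \<in> X" by blast
      have "left_ideal X" using X sub by auto
      hence "r * x \<in> X" using X by (simp add: left_ideal_def)
      thus "r * x \<in> \<Union>C" using X by blast
    qed
    thus "\<Union>C \<in> ?A" using C(1) sub by auto
  qed
  then obtain M where M: "M \<in> ?A" "\<forall>X\<in>?A. M \<subseteq> X \<longrightarrow> X = M" by blast
  have "maximal_left_ideal M"
    unfolding maximal_left_ideal_def
  proof (intro conjI allI impI)
    show "left_ideal M" using M by auto
    show "M \<noteq> UNIV" using M by auto
  next
    fix J assume J: "left_ideal J \<and> M \<subseteq> J \<and> J \<noteq> UNIV"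
    have "1 \<notin> J"
    proof
      assume "1 \<in> J"
      hence "\<forall>x. x * 1 \<in> J" using J by (auto simp: left_ideal_def)
      thus False using J by auto
    qed
    thus "J = M" using J M by auto
  qed
  thus ?thesis using M by auto
qed

lemma max_right_one: "maximal_right_ideal (M::'a::ring_1 set) \<Longrightarrow> 1 \<notin> M"
proof
  assume "maximal_right_ideal M" "1 \<in> M"
  hence "\<forall>x. 1 * x \<in> M" by (auto simp: maximal_right_ideal_def right_ideal_def)
  thus False using \<open>maximal_right_ideal M\<close> by (auto simp: maximal_right_ideal_def)
qed

lemma max_left_one: "maximal_left_ideal (M::'a::ring_1 set) \<Longrightarrow> 1 \<notin> M"
proof
  assume "maximal_left_ideal M" "1 \<in> M"
  hence "\<forall>x. x * 1 \<in> M" by (auto simp: maximal_left_ideal_def left_ideal_def)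
  thus False using \<open>maximal_left_ideal M\<close> by (auto simp: maximal_left_ideal_def)
qed

lemma idem_right:
  fixes e :: "'a::ring_1"
  assumes M: "maximal_right_ideal M" "two_sided_ideal M" and e: "e * e = e"
  shows "e \<in> M \<or> 1 - e \<in> M"
proof (cases "e \<in> M")
  case True thus ?thesis by blast
next
  case False
  hence "e \<notin> M" .
  let ?I = "{m + e * r |m r. m \<in> M}"
  have RM: "right_ideal M" and LM: "left_ideal M" using M by (auto simp: two_sided_ideal_def)
  have "right_ideal ?I"
    unfolding right_ideal_def
  proof (intro conjI ballI allI)
    have "(0::'a) = 0 + e * 0" "(0::'a) \<in> M" using RM by (auto simp: right_ideal_def)
    thus "0 \<in> ?I" by blast
  next
    fix x y assume "x \<in> ?I" "y \<in> ?I"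
    then obtain m r m' r' where "x = m + e * r" "y = m' + e * r'" "m \<in> M" "m' \<in> M" by blast
    hence "x + y = (m + m') + e * (r + r')" "m + m' \<in> M" using RM
      by (auto simp: right_ideal_def algebra_simps)
    thus "x + y \<in> ?I" by blast
  next
    fix x assume "x \<in> ?I"
    then obtain m r where "x = m + e * r" "m \<in> M" by blast
    hence "- x = (- m) + e * (- r)" "- m \<in> M" using RM
      by (auto simp: right_ideal_def algebra_simps)
    thus "- x \<in> ?I" by blast
  next
    fix x s assume "x \<in> ?I"
    then obtain m r where "x = m + e * r" "m \<in> M" by blast
    hence "x * s = (m * s) + e * (r * s)" "m * s \<in> M" using RM
      by (auto simp: right_ideal_def algebra_simps)
    thus "x * s \<in> ?I" by blast
  qed
  moreover have "M \<subseteq> ?I"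
  proof
    fix m assume "m \<in> M"
    moreover have "m = m + e * 0" by simp
    ultimately show "m \<in> ?I" by blast
  qed
  moreover have "e \<in> ?I"
  proof -
    have "e = 0 + e * 1" by simp
    moreover have "(0::'a) \<in> M" using RM by (simp add: right_ideal_def)
    ultimately show ?thesis by blast
  qed
  ultimately have "?I = UNIV"
  proof -
    assume a: "right_ideal ?I" "M \<subseteq> ?I" "e \<in> ?I"
    have mx: "\<forall>I. right_ideal I \<and> M \<subseteq> I \<and> I \<noteq> UNIV \<longrightarrow> I = M"
      using M(1) unfolding maximal_right_ideal_def by blast
    show ?thesis
    proof (rule ccontr)
      assume "?I \<noteq> UNIV"
      with mx a have "?I = M" by blast
      with a(3) \<open>e \<notin> M\<close> show False by blast
    qed
  qed
  hence "1 \<in> ?I" by blast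
  then obtain m r where mr: "1 = m + e * r" "m \<in> M" by blast
  have "1 - e = (1 - e) * (m + e * r)" by (simp only: mr(1)[symmetric] mult_1_right)
  also have "\<dots> = (1 - e) * m + ((1 - e) * e) * r" by (simp add: distrib_left mult.assoc)
  also have "\<dots> = (1 - e) * m" using e by (simp add: left_diff_distrib)
  finally have eq: "1 - e = (1 - e) * m" .
  have "(1 - e) * m \<in> M" using LM mr(2) unfolding left_ideal_def by blast
  hence "1 - e \<in> M" by (simp only: eq[symmetric])
  thus ?thesis by blast
qed

lemma idem_left:
  fixes e :: "'a::ring_1"
  assumes M: "maximal_left_ideal M" "two_sided_ideal M" and e: "e * e = e"
  shows "e \<in> M \<or> 1 - e \<in> M"
proof (cases "e \<in> M")
  case True thus ?thesis by blast
next
  case False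
  hence "e \<notin> M" .
  let ?I = "{m + r * e |m r. m \<in> M}"
  have RM: "right_ideal M" and LM: "left_ideal M" using M by (auto simp: two_sided_ideal_def)
  have "left_ideal ?I"
    unfolding left_ideal_def
  proof (intro conjI ballI allI)
    have "(0::'a) = 0 + 0 * e" "(0::'a) \<in> M" using LM by (auto simp: left_ideal_def)
    thus "0 \<in> ?I" by blast
  next
    fix x y assume "x \<in> ?I" "y \<in> ?I"
    then obtain m r m' r' where "x = m + r * e" "y = m' + r' * e" "m \<in> M" "m' \<in> M" by blast
    hence "x + y = (m + m') + (r + r') * e" "m + m' \<in> M" using LM
      by (auto simp: left_ideal_def algebra_simps)
    thus "x + y \<in> ?I" by blast
  next
    fix x assume "x \<in> ?I"
    then obtain m r where "x = m + r * e" "m \<in> M" by blast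
    hence "- x = (- m) + (- r) * e" "- m \<in> M" using LM
      by (auto simp: left_ideal_def algebra_simps)
    thus "- x \<in> ?I" by blast
  next
    fix x s assume "x \<in> ?I"
    then obtain m r where "x = m + r * e" "m \<in> M" by blast
    hence "s * x = (s * m) + (s * r) * e" "s * m \<in> M" using LM
      by (auto simp: left_ideal_def algebra_simps)
    thus "s * x \<in> ?I" by blast
  qed
  moreover have "M \<subseteq> ?I"
  proof
    fix m assume "m \<in> M"
    moreover have "m = m + 0 * e" by simp
    ultimately show "m \<in> ?I" by blast
  qed
  moreover have "e \<in> ?I"
  proof -
    have "e = 0 + 1 * e" by simp
    moreover have "(0::'a) \<in> M" using LM by (simp add: left_ideal_def)
    ultimately show ?thesis by blast
  qed
  ultimately have "?I = UNIV"
  proof -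
    assume a: "left_ideal ?I" "M \<subseteq> ?I" "e \<in> ?I"
    have mx: "\<forall>I. left_ideal I \<and> M \<subseteq> I \<and> I \<noteq> UNIV \<longrightarrow> I = M"
      using M(1) unfolding maximal_left_ideal_def by blast
    show ?thesis
    proof (rule ccontr)
      assume "?I \<noteq> UNIV"
      with mx a have "?I = M" by blast
      with a(3) \<open>e \<notin> M\<close> show False by blast
    qed
  qed
  hence "1 \<in> ?I" by blast
  then obtain m r where mr: "1 = m + r * e" "m \<in> M" by blast
  have "1 - e = (m + r * e) * (1 - e)" by (simp only: mr(1)[symmetric] mult_1_left)
  also have "\<dots> = m * (1 - e) + r * (e * (1 - e))" by (simp add: distrib_right mult.assoc)
  also have "\<dots> = m * (1 - e)" using e by (simp add: right_diff_distrib)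
  finally have eq: "1 - e = m * (1 - e)" .
  have "m * (1 - e) \<in> M" using RM mr(2) unfolding right_ideal_def by blast
  hence "1 - e \<in> M" by (simp only: eq[symmetric])
  thus ?thesis by blast
qed


lemma sum_split_nat:
  fixes f :: "nat \<Rightarrow> 'a::comm_monoid_add"
  shows "(\<Sum>i<a+b. f i) = (\<Sum>i<a. f i) + (\<Sum>i<b. f (a+i))"
  by (induction b) (simp_all add: add.assoc)

definition RuR :: "'a::ring_1 \<Rightarrow> 'a set" where
  "RuR u = {z. \<exists>n (x::nat \<Rightarrow> 'a) y. (\<Sum>i<n. x i * u * y i) = z}"

lemma RuR_intro:
  fixes n :: nat and x y :: "nat \<Rightarrow> 'a::ring_1"
  shows "(\<Sum>i<n. x i * u * y i) = z \<Longrightarrow> z \<in> RuR u"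
  unfolding RuR_def by blast

lemma RuR_sum:
  fixes u :: "'a::ring_1"
  assumes "p \<in> RuR u" "q \<in> RuR u"
  shows "p + q \<in> RuR u"
proof -
  obtain n1 :: nat and x1 y1 :: "nat \<Rightarrow> 'a" where 1: "(\<Sum>i<n1. x1 i * u * y1 i) = p" using assms(1) by (auto simp: RuR_def)
  obtain n2 :: nat and x2 y2 :: "nat \<Rightarrow> 'a" where 2: "(\<Sum>i<n2. x2 i * u * y2 i) = q" using assms(2) by (auto simp: RuR_def)
  define x where "x i = (if i < n1 then x1 i else x2 (i - n1))" for i
  define y where "y i = (if i < n1 then y1 i else y2 (i - n1))" for i
  have "(\<Sum>i<n1+n2. x i * u * y i) = (\<Sum>i<n1. x i * u * y i) + (\<Sum>i<n2. x (n1+i) * u * y (n1+i))"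
    by (rule sum_split_nat)
  also have "(\<Sum>i<n1. x i * u * y i) = p"
    unfolding 1[symmetric] by (rule sum.cong) (auto simp: x_def y_def)
  also have "(\<Sum>i<n2. x (n1+i) * u * y (n1+i)) = q"
    unfolding 2[symmetric] by (rule sum.cong) (auto simp: x_def y_def)
  finally show ?thesis by (rule RuR_intro)
qed

lemma RuR_two_sided: "two_sided_ideal (RuR (u::'a::ring_1))"
proof -
  have z: "0 \<in> RuR u" unfolding RuR_def by (auto intro!: exI[of _ 0])
  have n: "- p \<in> RuR u" if P: "p \<in> RuR u" for p
  proof -
    obtain n :: nat and x y :: "nat \<Rightarrow> 'a" where "(\<Sum>i<n. x i * u * y i) = p" using P unfolding RuR_def by blast
    hence "(\<Sum>i<n. (\<lambda>i. - x i) i * u * y i) = - p" by (simp add: sum_negf)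
    thus ?thesis by (rule RuR_intro)
  qed
  have r: "p * t \<in> RuR u" if P: "p \<in> RuR u" for p t
  proof -
    obtain n :: nat and x y :: "nat \<Rightarrow> 'a" where "(\<Sum>i<n. x i * u * y i) = p" using P unfolding RuR_def by blast
    moreover have "(\<Sum>i<n. x i * u * (\<lambda>i. y i * t) i) = (\<Sum>i<n. x i * u * y i) * t"
      by (simp add: sum_distrib_right mult.assoc)
    ultimately have "(\<Sum>i<n. x i * u * (\<lambda>i. y i * t) i) = p * t" by simp
    thus ?thesis by (rule RuR_intro)
  qed
  have l: "t * p \<in> RuR u" if P: "p \<in> RuR u" for p t
  proof -
    obtain n :: nat and x y :: "nat \<Rightarrow> 'a" where "(\<Sum>i<n. x i * u * y i) = p" using P unfolding RuR_def by blast
    moreover have "(\<Sum>i<n. (\<lambda>i. t * x i) i * u * y i) = t * (\<Sum>i<n. x i * u * y i)"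
      by (simp add: sum_distrib_left mult.assoc)
    ultimately have "(\<Sum>i<n. (\<lambda>i. t * x i) i * u * y i) = t * p" by simp
    thus ?thesis by (rule RuR_intro)
  qed
  show ?thesis unfolding two_sided_ideal_def right_ideal_def left_ideal_def
    using z n r l RuR_sum by blast
qed

lemma u_RuR: "u \<in> RuR (u::'a::ring_1)"
proof -
  have "(\<Sum>i<Suc 0. (\<lambda>_. 1) i * u * (\<lambda>_. 1) i) = u" by simp
  thus ?thesis by (rule RuR_intro)
qed

lemma full_RuR: "full u \<longleftrightarrow> (1::'a::ring_1) \<in> RuR u"
  unfolding full_def RuR_def by auto

lemma right_case:
  fixes a :: "'a::ring_1"
  assumes rq: "\<forall>M::'a set. maximal_right_ideal M \<longrightarrow> two_sided_ideal M"
    and ex: "\<exists>e. e * e = e \<and> (\<exists>r. e = a * r) \<and> (\<exists>s. 1 - e = (1 - a) * s)"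
  shows "feckly_clean_elem a"
proof -
  obtain e r s where e: "e * e = e" and er: "e = a * r" and es: "1 - e = (1 - a) * s"
    using ex by blast
  define u where "u = a - (1 - e)"
  have dec: "a = (1 - e) + u" unfolding u_def by simp
  have fu: "full u"
  proof (rule ccontr)
    assume "\<not> full u"
    hence "1 \<notin> RuR u" by (simp add: full_RuR)
    moreover have "right_ideal (RuR u)" using RuR_two_sided[of u] unfolding two_sided_ideal_def by blast
    ultimately obtain M where M: "maximal_right_ideal M" "RuR u \<subseteq> M" using zorn_right by blast
    have ts: "two_sided_ideal M" using rq M(1) by blast
    have RM: "right_ideal M" and LM: "left_ideal M" using ts by (auto simp: two_sided_ideal_def)
    have add: "p + q \<in> M" if "p \<in> M" "q \<in> M" for p q using RM that by (simp add: right_ideal_def)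
    have neg: "- p \<in> M" if "p \<in> M" for p using RM that by (simp add: right_ideal_def)
    have rm: "p * t \<in> M" if "p \<in> M" for p t using RM that by (simp add: right_ideal_def)
    have uM: "u \<in> M" using M(2) u_RuR by blast
    have one: "1 \<notin> M" using max_right_one M(1) by blast
    from idem_right[OF M(1) ts e] show False
    proof
      assume eM: "e \<in> M"
      have "- u + e \<in> M" using add neg uM eM by blast
      moreover have "- u + e = 1 - a" unfolding u_def by simp
      ultimately have "(1 - a) * s \<in> M" using rm by simp
      hence "1 - e \<in> M" using es by simp
      hence "(1 - e) + e \<in> M" using add eM by blast
      thus False using one by simp
    next
      assume eM: "1 - e \<in> M"
      have "u + (1 - e) \<in> M" using add uM eM by blast
      hence "a \<in> M" using dec by (simp add: add.commute)
      hence "e \<in> M" using rm er by simp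
      hence "(1 - e) + e \<in> M" using add eM by blast
      thus False using one by simp
    qed
  qed
  have jac: "(1 - e) * t * (1 - (1 - e)) \<in> jacobson" for t
  proof -
    have "(1 - e) * t * e \<in> M" if M: "maximal_right_ideal M" for M
    proof -
      have ts: "two_sided_ideal M" using rq M by blast
      have RM: "right_ideal M" and LM: "left_ideal M" using ts by (auto simp: two_sided_ideal_def)
      from idem_right[OF M ts e] show ?thesis
      proof
        assume "e \<in> M" thus ?thesis using LM by (simp add: left_ideal_def)
      next
        assume "1 - e \<in> M"
        hence "(1 - e) * (t * e) \<in> M" using RM by (simp add: right_ideal_def)
        thus ?thesis by (simp add: mult.assoc)
      qed
    qed
    thus ?thesis unfolding jacobson_def by simp
  qed
  show ?thesis unfolding feckly_clean_elem_def using dec fu jac by blast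
qed

lemma left_inv:
  fixes z :: "'a::ring_1"
  assumes "\<forall>L::'a set. maximal_left_ideal L \<longrightarrow> z \<in> L"
  shows "\<exists>v. v * (1 - z) = 1"
proof (rule ccontr)
  assume na: "\<not> ?thesis"
  let ?I = "{v * (1 - z) | v. True}"
  have "left_ideal ?I"
    unfolding left_ideal_def
  proof (intro conjI ballI allI)
    have "(0::'a) = 0 * (1 - z)" by simp
    thus "0 \<in> ?I" by blast
  next
    fix p q assume "p \<in> ?I" "q \<in> ?I"
    then obtain v w where "p = v * (1 - z)" "q = w * (1 - z)" by blast
    hence "p + q = (v + w) * (1 - z)" by (simp add: distrib_right)
    thus "p + q \<in> ?I" by blast
  next
    fix p assume "p \<in> ?I"
    then obtain v where "p = v * (1 - z)" by blast
    hence "- p = (- v) * (1 - z)" by simp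
    thus "- p \<in> ?I" by blast
  next
    fix p t assume "p \<in> ?I"
    then obtain v where "p = v * (1 - z)" by blast
    hence "t * p = (t * v) * (1 - z)" by (simp add: mult.assoc)
    thus "t * p \<in> ?I" by blast
  qed
  moreover have "1 \<notin> ?I" using na by auto
  ultimately obtain L where L: "maximal_left_ideal L" "?I \<subseteq> L" using zorn_left by blast
  have LL: "left_ideal L" using L(1) by (simp add: maximal_left_ideal_def)
  have "1 * (1 - z) \<in> ?I" by blast
  hence "1 - z \<in> L" using L(2) by auto
  moreover have "z \<in> L" using assms L(1) by blast
  ultimately have "(1 - z) + z \<in> L" using LL unfolding left_ideal_def by blast
  thus False using max_left_one[OF L(1)] by simp
qed

lemma jac_left:
  fixes x :: "'a::ring_1"
  assumes lq: "\<forall>M::'a set. maximal_left_ideal M \<longrightarrow> two_sided_ideal M"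
    and xL: "\<forall>L::'a set. maximal_left_ideal L \<longrightarrow> x \<in> L"
  shows "x \<in> jacobson"
  unfolding jacobson_def
proof (intro InterI, simp)
  fix M :: "'a set" assume M: "maximal_right_ideal M"
  have RM: "right_ideal M" using M by (simp add: maximal_right_ideal_def)
  show "x \<in> M"
  proof (rule ccontr)
    assume "x \<notin> M"
    let ?I = "{m + x * r |m r. m \<in> M}"
    have "right_ideal ?I"
      unfolding right_ideal_def
    proof (intro conjI ballI allI)
      have "(0::'a) = 0 + x * 0" "(0::'a) \<in> M" using RM by (auto simp: right_ideal_def)
      thus "0 \<in> ?I" by blast
    next
      fix p q assume "p \<in> ?I" "q \<in> ?I"
      then obtain m r m' r' where "p = m + x * r" "q = m' + x * r'" "m \<in> M" "m' \<in> M" by blast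
      hence "p + q = (m + m') + x * (r + r')" "m + m' \<in> M" using RM
        by (auto simp: right_ideal_def algebra_simps)
      thus "p + q \<in> ?I" by blast
    next
      fix p assume "p \<in> ?I"
      then obtain m r where "p = m + x * r" "m \<in> M" by blast
      hence "- p = (- m) + x * (- r)" "- m \<in> M" using RM
        by (auto simp: right_ideal_def algebra_simps)
      thus "- p \<in> ?I" by blast
    next
      fix p t assume "p \<in> ?I"
      then obtain m r where "p = m + x * r" "m \<in> M" by blast
      hence "p * t = (m * t) + x * (r * t)" "m * t \<in> M" using RM
        by (auto simp: right_ideal_def algebra_simps)
      thus "p * t \<in> ?I" by blast
    qed
    moreover have "M \<subseteq> ?I"
    proof
      fix m assume "m \<in> M"
      moreover have "m = m + x * 0" by simp
      ultimately show "m \<in> ?I" by blast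
    qed
    moreover have "x \<in> ?I"
    proof -
      have "x = 0 + x * 1" by simp
      moreover have "(0::'a) \<in> M" using RM by (simp add: right_ideal_def)
      ultimately show ?thesis by blast
    qed
    ultimately have "?I = UNIV"
    proof -
      assume a: "right_ideal ?I" "M \<subseteq> ?I" "x \<in> ?I"
      have mx: "\<forall>I. right_ideal I \<and> M \<subseteq> I \<and> I \<noteq> UNIV \<longrightarrow> I = M"
        using M unfolding maximal_right_ideal_def by blast
      show ?thesis
      proof (rule ccontr)
        assume "?I \<noteq> UNIV"
        with mx a have "?I = M" by blast
        with a(3) \<open>x \<notin> M\<close> show False by blast
      qed
    qed
    hence "1 \<in> ?I" by blast
    then obtain m t where mt: "1 = m + x * t" "m \<in> M" by blast
    define z where "z = x * t"
    have zL: "z \<in> L" if "maximal_left_ideal L" for L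
    proof -
      have "two_sided_ideal L" using lq that by blast
      hence "right_ideal L" by (simp add: two_sided_ideal_def)
      thus ?thesis using xL that unfolding z_def right_ideal_def by blast
    qed
    obtain v where v: "v * (1 - z) = 1" using left_inv zL by blast
    have vzL: "- (v * z) \<in> L" if "maximal_left_ideal L" for L
    proof -
      have "left_ideal L" using that by (simp add: maximal_left_ideal_def)
      thus ?thesis using zL[OF that] unfolding left_ideal_def by blast
    qed
    obtain w where w: "w * (1 - - (v * z)) = 1" using left_inv[of "- (v * z)"] vzL by blast
    have vv: "v = 1 + v * z"
    proof -
      have "v - v * z = 1" using v by (simp add: right_diff_distrib)
      thus ?thesis by (simp add: algebra_simps)
    qed
    have wv: "w * v = 1" using w vv by simp
    have "w = w * (v * (1 - z))" using v by simp
    also have "\<dots> = (w * v) * (1 - z)" by (simp only: mult.assoc)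
    also have "\<dots> = 1 - z" using wv by simp
    finally have "(1 - z) * v = 1" using wv by simp
    moreover have "m = 1 - z" using mt unfolding z_def by (simp add: algebra_simps)
    ultimately have "m * v = 1" by simp
    moreover have "m * v \<in> M" using RM mt(2) by (simp add: right_ideal_def)
    ultimately show False using max_right_one[OF M] by simp
  qed
qed

lemma left_case:
  fixes a :: "'a::ring_1"
  assumes lq: "\<forall>M::'a set. maximal_left_ideal M \<longrightarrow> two_sided_ideal M"
    and ex: "\<exists>e. e * e = e \<and> (\<exists>r. e = a * r) \<and> (\<exists>s. 1 - e = (1 - a) * s)"
  shows "feckly_clean_elem a"
proof -
  obtain e r s where e: "e * e = e" and er: "e = a * r" and es: "1 - e = (1 - a) * s"
    using ex by blast
  define u where "u = a - (1 - e)"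
  have dec: "a = (1 - e) + u" unfolding u_def by simp
  have fu: "full u"
  proof (rule ccontr)
    assume "\<not> full u"
    hence "1 \<notin> RuR u" by (simp add: full_RuR)
    moreover have "left_ideal (RuR u)" using RuR_two_sided[of u] unfolding two_sided_ideal_def by blast
    ultimately obtain M where M: "maximal_left_ideal M" "RuR u \<subseteq> M" using zorn_left by blast
    have ts: "two_sided_ideal M" using lq M(1) by blast
    have RM: "right_ideal M" and LM: "left_ideal M" using ts by (auto simp: two_sided_ideal_def)
    have add: "p + q \<in> M" if "p \<in> M" "q \<in> M" for p q using RM that by (simp add: right_ideal_def)
    have neg: "- p \<in> M" if "p \<in> M" for p using RM that by (simp add: right_ideal_def)
    have rm: "p * t \<in> M" if "p \<in> M" for p t using RM that by (simp add: right_ideal_def)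
    have uM: "u \<in> M" using M(2) u_RuR by blast
    have one: "1 \<notin> M" using max_left_one M(1) by blast
    from idem_left[OF M(1) ts e] show False
    proof
      assume eM: "e \<in> M"
      have "- u + e \<in> M" using add neg uM eM by blast
      moreover have "- u + e = 1 - a" unfolding u_def by simp
      ultimately have "(1 - a) * s \<in> M" using rm by simp
      hence "1 - e \<in> M" using es by simp
      hence "(1 - e) + e \<in> M" using add eM by blast
      thus False using one by simp
    next
      assume eM: "1 - e \<in> M"
      have "u + (1 - e) \<in> M" using add uM eM by blast
      hence "a \<in> M" using dec by (simp add: add.commute)
      hence "e \<in> M" using rm er by simp
      hence "(1 - e) + e \<in> M" using add eM by blast
      thus False using one by simp
    qed
  qed
  have jac: "(1 - e) * t * (1 - (1 - e)) \<in> jacobson" for t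
  proof -
    have "(1 - e) * t * e \<in> M" if M: "maximal_left_ideal M" for M
    proof -
      have ts: "two_sided_ideal M" using lq M by blast
      have RM: "right_ideal M" and LM: "left_ideal M" using ts by (auto simp: two_sided_ideal_def)
      from idem_left[OF M ts e] show ?thesis
      proof
        assume "e \<in> M" thus ?thesis using LM by (simp add: left_ideal_def)
      next
        assume "1 - e \<in> M"
        hence "(1 - e) * (t * e) \<in> M" using RM by (simp add: right_ideal_def)
        thus ?thesis by (simp add: mult.assoc)
      qed
    qed
    hence "(1 - e) * t * e \<in> jacobson" using jac_left[OF lq] by blast
    thus ?thesis by simp
  qed
  show ?thesis unfolding feckly_clean_elem_def using dec fu jac by blast
qed

theorem theorem4p5:
  shows "(right_quasi_duo TYPE('a::ring_1) \<and> exchange_ring TYPE('a) \<longrightarrow> feckly_clean TYPE('a))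
       \<and> (left_quasi_duo TYPE('a) \<and> exchange_ring TYPE('a) \<longrightarrow> feckly_clean TYPE('a))"
  unfolding right_quasi_duo_def left_quasi_duo_def exchange_ring_def feckly_clean_def
  using right_case left_case by blast

end
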